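(* Assume the linear setting below. For every integer $k\ge0$ and every integer $n$ with $s^k\le n<s^{k+1}$, \[ b_{s^{k+1}-1}\le b_n\le b_{s^k}. \]
   Context: Linear setting: integers $q\ge2$, $r\in\{0,1,\dots,q-1\}$, $p>q+r$; $A=\{d\in\{0,1,\dots,p-1\}: d\equiv r\pmod q\}$, $s=\#A\ge2$, and $h(i)=qi+r$ for $0\le i\le s-1$. For a positive integer $n$ with base-$s$ expansion $n=\sum_{i=0}^k\varepsilon_i s^i$ ($\varepsilon_k\ne0$), $a_n=\sum_{i=0}^k h(\varepsilon_i)p^i$ and $b_n=a_n/n^{\log_s p}$. *)

theory Defs
  imports Complex_Main
begin

definition digitSet :: "nat \<Rightarrow> nat \<Rightarrow> nat \<Rightarrow> nat set" where
  "digitSet q r p = {d. d < p \<and> d mod q = r}"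

definition sz :: "nat \<Rightarrow> nat \<Rightarrow> nat \<Rightarrow> nat" where
  "sz q r p = card (digitSet q r p)"

definition hmap :: "nat \<Rightarrow> nat \<Rightarrow> nat \<Rightarrow> nat" where
  "hmap q r i = q * i + r"

definition ndigits :: "nat \<Rightarrow> nat \<Rightarrow> nat" where
  "ndigits s n = (LEAST m. n < s ^ m)"

definition digit :: "nat \<Rightarrow> nat \<Rightarrow> nat \<Rightarrow> nat" where
  "digit s n i = (n div s ^ i) mod s"

definition aseq :: "nat \<Rightarrow> nat \<Rightarrow> nat \<Rightarrow> nat \<Rightarrow> nat" where
  "aseq q r p n = (let s = sz q r p in
     (\<Sum>i<ndigits s n. hmap q r (digit s n i) * p ^ i))"

definition bseq :: "nat \<Rightarrow> nat \<Rightarrow> nat \<Rightarrow> nat \<Rightarrow> real" where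
  "bseq q r p n = real (aseq q r p n) / real n powr (log (real (sz q r p)) (real p))"

end

theory Submission
  imports Defs "HOL-Analysis.Analysis"
begin

lemma shift_mono:
  fixes a b d al :: real
  assumes "al \<ge> 1" "0 < a" "a \<le> b" "0 \<le> d"
  shows "(a+d) powr al - a powr al \<le> (b+d) powr al - b powr al"
proof (cases "d = 0 \<or> a = b")
  case True then show ?thesis by auto
next
  case False
  then have ab: "a < b" and d: "d > 0" using assms by auto
  define f where "f = (\<lambda>x::real. x powr al)"
  have cvx: "convex_on {0<..} f" unfolding f_def using powr_convex assms(1) by blast
  have s1: "(f a - f (a+d))/(a - (a+d)) \<le> (f a - f (b+d))/(a - (b+d))"
    by (rule convex_on_slope_le(1)[OF cvx]) (use assms ab d in auto)
  have s2: "(f a - f (b+d))/(a-(b+d)) \<le> (f b - f (b+d))/(b - (b+d))"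
    by (rule convex_on_slope_le(2)[OF cvx]) (use assms ab d in auto)
  have "(f (a+d) - f a)/d \<le> (f (b+d) - f b)/d"
  proof -
    have e1: "(f a - f (a+d))/(a - (a+d)) = (f(a+d) - f a)/d" using d by (simp add: field_simps)
    have e2: "(f b - f (b+d))/(b - (b+d)) = (f(b+d) - f b)/d" using d by (simp add: field_simps)
    show ?thesis using s1 s2 e1 e2 by linarith
  qed
  then have "f (a+d) - f a \<le> f (b+d) - f b" using d
    by (simp add: divide_le_cancel)
  then show ?thesis unfolding f_def .
qed

definition G :: "nat \<Rightarrow> nat \<Rightarrow> nat \<Rightarrow> nat \<Rightarrow> nat" where
  "G s p k n = (\<Sum>i<k. digit s n i * p ^ i)"

lemma G_0 [simp]: "G s p 0 n = 0" by (simp add: G_def)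

lemma G_Suc: "G s p (Suc k) n = n mod s + p * G s p k (n div s)"
proof -
  have "G s p (Suc k) n = digit s n 0 * p^0 + (\<Sum>i<k. digit s n (Suc i) * p ^ (Suc i))"
    unfolding G_def by (rule sum.lessThan_Suc_shift)
  also have "(\<Sum>i<k. digit s n (Suc i) * p ^ (Suc i)) = (\<Sum>i<k. p * (digit s (n div s) i * p ^ i))"
    by (rule sum.cong) (auto simp: digit_def div_mult2_eq)
  also have "\<dots> = p * G s p k (n div s)" by (simp add: G_def sum_distrib_left)
  finally show ?thesis by (simp add: digit_def)
qed

lemma ndigits_eq:
  assumes "s \<ge> 2" "s ^ k \<le> n" "n < s ^ (k+1)"
  shows "ndigits s n = k + 1"
  unfolding ndigits_def
proof (rule Least_equality)
  show "n < s ^ (k+1)" by fact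
  fix m assume "n < s ^ m"
  show "k + 1 \<le> m"
  proof (rule ccontr)
    assume "\<not> k + 1 \<le> m"
    then have "s ^ m \<le> s ^ k" using assms(1) by (intro power_increasing) auto
    then show False using assms \<open>n < s^m\<close> by linarith
  qed
qed

lemma aseq_eq:
  assumes "ndigits (sz q r p) n = K"
  shows "aseq q r p n = q * G (sz q r p) p K n + r * (\<Sum>i<K. p ^ i)"
  unfolding aseq_def Let_def hmap_def assms G_def
  by (simp add: sum.distrib sum_distrib_left algebra_simps)

lemma G_pow: "s \<ge> 2 \<Longrightarrow> G s p (Suc k) (s ^ k) = p ^ k"
proof (induction k)
  case 0 then show ?case by (simp add: G_Suc)
next
  case (Suc k)
  have "G s p (Suc (Suc k)) (s ^ Suc k) = s ^ Suc k mod s + p * G s p (Suc k) (s ^ Suc k div s)"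
    by (rule G_Suc)
  also have "s ^ Suc k div s = s ^ k" using Suc.prems by simp
  finally show ?case using Suc by simp
qed

lemma G_max: "s \<ge> 2 \<Longrightarrow> G s p k (s ^ k - 1) = (s - 1) * (\<Sum>i<k. p ^ i)"
proof (induction k)
  case 0 then show ?case by simp
next
  case (Suc k)
  have sk: "s ^ k \<ge> 1" using Suc.prems by simp
  have eq: "s ^ Suc k - 1 = (s - 1) + s * (s ^ k - 1)" using sk Suc.prems
    by (simp add: algebra_simps diff_mult_distrib2)
  have m: "(s ^ Suc k - 1) mod s = s - 1" unfolding eq mod_mult_self2 using Suc.prems by simp
  have dv: "(s ^ Suc k - 1) div s = s ^ k - 1" unfolding eq using Suc.prems by (simp only: div_mult_self2) simp
  have sh: "(\<Sum>i<Suc k. p ^ i) = 1 + p * (\<Sum>i<k. p ^ i)"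
    by (subst sum.lessThan_Suc_shift) (simp add: sum_distrib_left)
  show ?case unfolding G_Suc m dv Suc.IH[OF Suc.prems] sh
    by (simp add: distrib_left mult.left_commute)
qed

lemma al_facts:
  assumes "s \<ge> 2" "p \<ge> s"
  shows "log (real s) (real p) \<ge> 1" "real s powr log (real s) (real p) = real p"
proof -
  have "log (real s) (real s) \<le> log (real s) (real p)" using assms by simp
  then show "log (real s) (real p) \<ge> 1" using assms by simp
  show "real s powr log (real s) (real p) = real p" using assms by simp
qed

lemma G_upper:
  assumes "s \<ge> 2" "p \<ge> s" "n < s ^ k"
  shows "real (G s p k n) \<le> real n powr log (real s) (real p)"
  using assms(3)
proof (induction k arbitrary: n)
  case 0 then show ?case by simp
next
  case (Suc k)
  define al where "al = log (real s) (real p)"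
  have al1: "al \<ge> 1" and sal: "real s powr al = real p" using al_facts[OF assms(1,2)] al_def by auto
  define m where "m = n div s"
  define e where "e = n mod s"
  have n: "n = s * m + e" unfolding m_def e_def by simp
  have ml: "m < s ^ k" using Suc.prems assms(1) unfolding m_def
    by (simp add: div_less_iff_less_mult mult.commute)
  have IH: "real (G s p k m) \<le> real m powr al" using Suc.IH[OF ml] al_def by simp
  have G: "real (G s p (Suc k) n) = real e + real p * real (G s p k m)"
    unfolding G_Suc m_def e_def by simp
  have "real (G s p (Suc k) n) \<le> real e + real p * real m powr al"
    unfolding G using IH by (simp add: mult_left_mono)
  also have "\<dots> \<le> real n powr al"
  proof (cases "m = 0")
    case True
    have "real e \<le> real e powr al"
    proof (cases "e = 0")
      case False
      then have "real e powr 1 \<le> real e powr al" using al1 by (intro powr_mono) auto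
      then show ?thesis using False by simp
    qed simp
    then show ?thesis using True n by simp
  next
    case False
    have sm: "real p * real m powr al = (real s * real m) powr al" by (simp add: powr_mult sal)
    have "(1 + real e) powr al - 1 powr al \<le> (real s * real m + real e) powr al - (real s * real m) powr al"
      using shift_mono[of al 1 "real s * real m" "real e"] al1 False assms(1)
      by (simp add: mult_ge1_I)
    moreover have "(1 + real e) powr 1 \<le> (1 + real e) powr al" using al1 by (intro powr_mono) auto
    ultimately show ?thesis using sm n by simp
  qed
  finally show ?case unfolding al_def .
qed

lemma comb_ineq:
  fixes c X A B t G p e s :: real
  assumes "c \<ge> 0" "0 \<le> t" "t \<le> 1" "X \<le> A + t * (B - A)"
    "c * (B - 1) \<le> p * G + (s - 1)" "c * (A - 1) \<le> p * G" "t * (s - 1) = e"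
  shows "c * (X - 1) \<le> p * G + e"
proof -
  have "c * (X - 1) \<le> c * (A + t * (B - A) - 1)" using assms by (intro mult_left_mono) auto
  also have "\<dots> = (1 - t) * (c * (A - 1)) + t * (c * (B - 1))" by (simp add: algebra_simps)
  also have "\<dots> \<le> (1 - t) * (p * G) + t * (p * G + (s - 1))"
    using assms by (intro add_mono mult_left_mono) auto
  also have "\<dots> = p * G + e" using assms(7) by (simp add: algebra_simps)
  finally show ?thesis .
qed

lemma G_lower:
  assumes "s \<ge> 2" "p \<ge> s" "n < s ^ k"
  shows "(real s - 1) / (real p - 1) * ((real n + 1) powr log (real s) (real p) - 1) \<le> real (G s p k n)"
  using assms(3)
proof (induction k arbitrary: n)
  case 0 then show ?case by simp
next
  case (Suc k)
  define al where "al = log (real s) (real p)"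
  define c where "c = (real s - 1) / (real p - 1)"
  have al1: "al \<ge> 1" and sal: "real s powr al = real p" using al_facts[OF assms(1,2)] al_def by auto
  have c0: "c \<ge> 0" unfolding c_def using assms by simp
  have cp: "c * (real p - 1) = real s - 1" unfolding c_def using assms by simp
  define m where "m = n div s"
  define e where "e = n mod s"
  have n: "n = s * m + e" unfolding m_def e_def by simp
  have el: "e \<le> s - 1" unfolding e_def using assms(1) by (simp add: less_Suc_eq_le[symmetric])
  have ml: "m < s ^ k" using Suc.prems assms(1) unfolding m_def
    by (simp add: div_less_iff_less_mult mult.commute)
  have IH: "c * ((real m + 1) powr al - 1) \<le> real (G s p k m)" using Suc.IH[OF ml] al_def c_def by simp
  define Gm where "Gm = real (G s p k m)"
  have G: "real (G s p (Suc k) n) = real p * Gm + real e"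
    unfolding G_Suc m_def e_def Gm_def by simp
  define f where "f = (\<lambda>x::real. x powr al)"
  define x0 where "x0 = real s * real m + 1"
  define y0 where "y0 = real s * real m + real s"
  define A where "A = f x0"
  define B where "B = f y0"
  define X where "X = f (real n + 1)"
  define t where "t = real e / (real s - 1)"
  have s1: "real s - 1 > 0" using assms by simp
  have cvx: "convex_on {x0..y0} f" unfolding f_def
    by (rule convex_on_subset[OF powr_convex[OF al1]]) (auto simp: x0_def, smt (verit) of_nat_0_le_iff zero_le_mult_iff)
  have inI: "real n + 1 \<in> {x0..y0}" unfolding x0_def y0_def using el assms(1) n
    by (auto simp: of_nat_diff)
  have "X \<le> (B - A) / (y0 - x0) * (real n + 1 - x0) + A"
    using convex_onD_Icc'[OF cvx inI] unfolding X_def A_def B_def .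
  moreover have "(B - A) / (y0 - x0) * (real n + 1 - x0) = t * (B - A)"
    unfolding t_def x0_def y0_def n by simp
  ultimately have chord: "X \<le> A + t * (B - A)" by simp
  have Bv: "B = real p * (real m + 1) powr al"
    unfolding B_def f_def y0_def
    by (metis sal powr_mult distrib_left mult.right_neutral of_nat_0_le_iff)
  have hB: "c * (B - 1) \<le> real p * Gm + (real s - 1)"
  proof -
    have "c * (B - 1) = real p * (c * ((real m + 1) powr al - 1)) + c * (real p - 1)"
      unfolding Bv by (simp add: algebra_simps)
    also have "\<dots> \<le> real p * Gm + (real s - 1)" unfolding cp Gm_def using IH
      by (simp add: mult_left_mono)
    finally show ?thesis .
  qed
  have sh: "(1 + (real s - 1)) powr al - 1 powr al \<le> (x0 + (real s - 1)) powr al - x0 powr al"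
    using shift_mono[of al 1 x0 "real s - 1"] al1 s1 unfolding x0_def by simp
  have hA: "c * (A - 1) \<le> real p * Gm"
  proof -
    have "A - 1 \<le> B - real p" using sh sal unfolding A_def B_def f_def x0_def y0_def
      by (simp add: algebra_simps)
    then have "c * (A - 1) \<le> c * (B - real p)" using c0 by (intro mult_left_mono) auto
    also have "\<dots> = real p * (c * ((real m + 1) powr al - 1))"
      unfolding Bv by (simp add: algebra_simps)
    also have "\<dots> \<le> real p * Gm" unfolding Gm_def using IH by (simp add: mult_left_mono)
    finally show ?thesis .
  qed
  have t01: "0 \<le> t" "t \<le> 1" unfolding t_def using el s1 assms(1) by (auto simp: of_nat_diff)
  have te: "t * (real s - 1) = real e" unfolding t_def using s1 by simp
  have "c * (X - 1) \<le> real p * Gm + real e"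
    by (rule comb_ineq[OF c0 t01 chord hB hA te])
  then show ?case unfolding G X_def f_def c_def al_def .
qed

lemma pow_powr: "(x::real) \<ge> 0 \<Longrightarrow> (x ^ j) powr a = (x powr a) ^ j"
  by (induction j) (auto simp: powr_mult)

lemma psi_mono:
  fixes x y al :: real
  assumes "al \<ge> 1" "1 \<le> x" "x \<le> y"
  shows "((y+1) powr al - 1) / y powr al \<le> ((x+1) powr al - 1) / x powr al"
proof -
  have e: "((z+1) powr al - 1) / z powr al = (1/z + 1) powr al - (1/z) powr al" if "z \<ge> 1" for z :: real
  proof -
    have "(1/z + 1) = (z+1)/z" using that by (simp add: field_simps)
    then show ?thesis using that by (simp add: powr_divide diff_divide_distrib)
  qed
  have "(1/y + 1) powr al - (1/y) powr al \<le> (1/x + 1) powr al - (1/x) powr al"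
    using shift_mono[of al "1/y" "1/x" 1] assms by (simp add: frac_le add.commute)
  then show ?thesis using e assms by simp
qed

lemma sz_le: "sz q r p \<le> p"
proof -
  have "digitSet q r p \<subseteq> {..<p}" unfolding digitSet_def by auto
  then have "card (digitSet q r p) \<le> card {..<p}" by (intro card_mono) auto
  then show ?thesis unfolding sz_def by simp
qed

theorem mainTheorem16:
  fixes q r p k n :: nat
  assumes "q \<ge> 2" and "r < q" and "p > q + r" and "sz q r p \<ge> 2"
    and "sz q r p ^ k \<le> n" and "n < sz q r p ^ (k + 1)"
  shows "bseq q r p (sz q r p ^ (k + 1) - 1) \<le> bseq q r p n
       \<and> bseq q r p n \<le> bseq q r p (sz q r p ^ k)"
proof -
  define s where "s = sz q r p"
  have s2: "s \<ge> 2" and sp: "s \<le> p" using assms(4) sz_le unfolding s_def by auto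
  define al where "al = log (real s) (real p)"
  have al1: "al \<ge> 1" and sal: "real s powr al = real p" using al_facts[OF s2 sp] al_def by auto
  define N where "N = s ^ (k+1) - 1"
  have sk1: "s ^ k \<ge> 1" using s2 by simp
  have a2: "s * s ^ k \<ge> 2 * s ^ k" using s2 by simp
  have e2: "s ^ (k+1) = s * s ^ k" by simp
  have skN: "s ^ k \<le> N" "N < s ^ (k+1)" unfolding N_def e2 using a2 sk1 by linarith+
  define P where "P = real (\<Sum>i<k+1. p ^ i)"
  have bs: "bseq q r p m = real (q * G s p (k+1) m + r * (\<Sum>i<k+1. p ^ i)) / real m powr al"
    if "s ^ k \<le> m" "m < s ^ (k+1)" for m
    unfolding bseq_def aseq_eq[OF ndigits_eq[OF s2 that, folded s_def, unfolded s_def]]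
    by (simp add: s_def al_def)
  have pk: "real (s ^ j) powr al = real p ^ j" for j
    using pow_powr[of "real s" j al] sal by simp
  have pos: "real p > 0" using sp s2 by simp
  have n1: "real n \<ge> 1" using assms(5) sk1 unfolding s_def by linarith
  have nal: "real n powr al \<ge> real p ^ k"
    using powr_mono2[of al "real (s^k)" "real n"] assms(5) al1 pk unfolding s_def by simp
  have npos: "real n powr al > 0" using n1 by simp
  have P0: "P \<ge> 0" unfolding P_def by (simp only: of_nat_0_le_iff)
  have upper: "bseq q r p n \<le> bseq q r p (s ^ k)"
  proof -
    have "bseq q r p n = (real q * real (G s p (k+1) n) + real r * P) / real n powr al"
      using bs[of n] assms(5,6) unfolding s_def P_def by simp
    also have "\<dots> = real q * (real (G s p (k+1) n) / real n powr al) + real r * P / real n powr al"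
      by (simp add: add_divide_distrib)
    also have "\<dots> \<le> real q * 1 + real r * P / real p ^ k"
    proof (intro add_mono mult_left_mono)
      show "real (G s p (k+1) n) / real n powr al \<le> 1"
        using G_upper[OF s2 sp, of n "k+1"] assms(6) npos unfolding s_def al_def by simp
      show "real r * P / real n powr al \<le> real r * P / real p ^ k"
        using nal P0 pos npos by (intro divide_left_mono) auto
    qed auto
    also have "\<dots> = (real q * real p ^ k + real r * P) / real p ^ k" using pos
      by (simp add: field_simps)
    also have "\<dots> = bseq q r p (s ^ k)"
      using bs[of "s^k"] s2 G_pow[OF s2, of p k] pk[of k] unfolding P_def by simp
    finally show ?thesis .
  qed
  define c where "c = (real s - 1) / (real p - 1)"
  define psi where "psi = (\<lambda>x::real. ((x+1) powr al - 1) / x powr al)"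
  have N1: "real N \<ge> 1" using skN sk1 by linarith
  have nN: "real n \<le> real N" using assms(6) unfolding N_def s_def by simp
  have geo: "(real p - 1) * P = real p ^ (k+1) - 1"
    using one_diff_power_eq[of "real p" "k+1"] unfolding P_def by (simp add: algebra_simps)
  have GN: "real (G s p (k+1) N) = c * ((real N + 1) powr al - 1)"
  proof -
    have "real N + 1 = real (s ^ (k+1))" unfolding N_def using s2 by (simp add: of_nat_diff)
    then have "(real N + 1) powr al = real p ^ (k+1)" by (simp only: pk)
    moreover have "real (G s p (k+1) N) = (real s - 1) * P"
      unfolding N_def G_max[OF s2] P_def using s2 by (simp add: of_nat_diff)
    moreover have "c * ((real p - 1) * P) = (real s - 1) * P" unfolding c_def using sp s2 by simp
    ultimately show ?thesis using geo by simp
  qed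
  have Gn: "c * ((real n + 1) powr al - 1) \<le> real (G s p (k+1) n)"
    using G_lower[OF s2 sp, of n "k+1"] assms(6) unfolding c_def al_def s_def by simp
  have c0: "c \<ge> 0" unfolding c_def using s2 sp by simp
  have Npos: "real N powr al > 0" using N1 by simp
  have lower: "bseq q r p N \<le> bseq q r p n"
  proof -
    have "bseq q r p N = (real q * real (G s p (k+1) N) + real r * P) / real N powr al"
      using bs[of N] skN unfolding P_def by simp
    also have "\<dots> = real q * c * psi (real N) + real r * P / real N powr al"
      unfolding GN psi_def by (simp add: add_divide_distrib)
    also have "\<dots> \<le> real q * c * psi (real n) + real r * P / real n powr al"
    proof (intro add_mono mult_left_mono)
      show "psi (real N) \<le> psi (real n)" unfolding psi_def using psi_mono al1 n1 nN by blast
      show "real r * P / real N powr al \<le> real r * P / real n powr al"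
        using P0 npos nN n1 al1 by (intro divide_left_mono powr_mono2 mult_pos_pos) auto
    qed (use c0 in auto)
    also have "\<dots> = (real q * (c * ((real n + 1) powr al - 1)) + real r * P) / real n powr al"
      unfolding psi_def by (simp add: add_divide_distrib)
    also have "\<dots> \<le> (real q * real (G s p (k+1) n) + real r * P) / real n powr al"
      using Gn npos by (intro divide_right_mono add_mono mult_left_mono) auto
    also have "\<dots> = bseq q r p n"
      using bs[of n] assms(5,6) unfolding s_def P_def by simp
    finally show ?thesis .
  qed
  show ?thesis using upper lower unfolding N_def s_def by simp
qed

end
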